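(* Let $\mathcal X$, $\mathbf f$, $\mathbf M$, $\mathbf B_j$, $\mathbf H_j$, $\Phi$, $\Xi$, $\tilde{\mathcal X}$, $\tilde{\mathbf f}$, $\tilde{\mathbf M}$ and $\Phi_A$ be as in the context. Let $\tilde{\xi}^*:\tilde{\mathcal X}\to[0,\infty)$ be a solution of the optimization problem $$\min \Phi_A(\tilde{\xi})$$ over all designs $\tilde\xi:\tilde{\mathcal X}\to[0,\infty)$ subject to (i) $\tilde{\xi}(j,x)=\tilde{\xi}(1,x)$ for all $x\in\mathcal X$ and all $j=2,\ldots,s$; (ii) $\tilde{\xi}(y)=1$ for all $y\in\tilde{\mathcal Y}_j$ and all $j=1,\ldots,s$; (iii) the design $\tilde{\xi}(1,\cdot): x\mapsto\tilde\xi(1,x)$ on $\mathcal X$ belongs to $\Xi$. Then $\tilde{\xi}^*(1,\cdot)$ is a CBR-optimal design in the class $\Xi$, i.e. $\tilde{\xi}^*(1,\cdot)\in\Xi$ and $\Phi(\tilde{\xi}^*(1,\cdot))\le\Phi(\xi)$ for all $\xi\in\Xi$.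
   Context: Let $\mathcal X$ be a finite set (design space) and $\mathbf f:\mathcal X\to\mathbb R^p$ with $\mathrm{span}\{\mathbf f(x):x\in\mathcal X\}=\mathbb R^p$. A design on $\mathcal X$ is a map $\xi:\mathcal X\to[0,\infty)$ (exact designs take values in $\{0,1,2,\dots\}$). Its information matrix is $\mathbf M(\xi)=\sum_{x\in\mathcal X}\xi(x)\mathbf f(x)\mathbf f(x)^\top$. Let $s\ge1$, let $\mathbf B_1,\ldots,\mathbf B_s$ be symmetric non-negative definite $p\times p$ matrices and $\mathbf H_1,\ldots,\mathbf H_s$ symmetric positive definite $p\times p$ matrices. The compound Bayes risk criterion (CBRC) is $\Phi(\xi)=\sum_{j=1}^s\mathrm{tr}\big((\mathbf M(\xi)+\mathbf B_j)^{-1}\mathbf H_j\big)$ if all $\mathbf M(\xi)+\mathbf B_j$ are non-singular, and $\Phi(\xi)=+\infty$ otherwise. Let $\Xi\subseteq[0,\infty)^{\mathcal X}$ be a set of permissible designs containing at least one $\xi$ with $\Phi(\xi)<+\infty$. Artificial model: let $r_j=\mathrm{rank}(\mathbf B_j)$, let $\tilde{\mathcal Y}_j=\{y^{(j)}_1,\ldots,y^{(j)}_{r_j}\}$ be auxiliary sets and $\tilde{\mathcal X}_j=\{j\}\times\mathcal X$, chosen so that $\tilde{\mathcal X}_1,\ldots,\tilde{\mathcal X}_s,\tilde{\mathcal Y}_1,\ldots,\tilde{\mathcal Y}_s$ are pairwise disjoint; set $\tilde{\mathcal X}=\bigcup_{j=1}^s(\tilde{\mathcal X}_j\cup\tilde{\mathcal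 Y}_j)$. For each $j$ choose $\mathbf K_j\in\mathbb R^{p\times p}$ with $\mathbf H_j=\mathbf K_j\mathbf K_j^\top$ (so $\mathbf K_j$ is non-singular), set $\tilde{\mathbf f}_j(x)=\mathbf K_j^{-1}\mathbf f(x)$ for $x\in\mathcal X$, and choose vectors $\mathbf u_j(y^{(j)}_k)\in\mathbb R^p$, $k=1,\ldots,r_j$, with $\mathbf K_j^{-1}\mathbf B_j\mathbf K_j^{-\top}=\sum_{k=1}^{r_j}\mathbf u_j(y^{(j)}_k)\mathbf u_j(y^{(j)}_k)^\top$. Define $\tilde{\mathbf f}:\tilde{\mathcal X}\to\mathbb R^{sp}$ by: $\tilde{\mathbf f}((j,x))$ is the vector whose $j$-th block of $p$ coordinates equals $\tilde{\mathbf f}_j(x)$ and all other coordinates are $0$; for $y\in\tilde{\mathcal Y}_j$, $\tilde{\mathbf f}(y)$ is the vector whose $j$-th block of $p$ coordinates equals $\mathbf u_j(y)$ and all other coordinates are $0$. For a design $\tilde\xi:\tilde{\mathcal X}\to[0,\infty)$ let $\tilde{\mathbf M}(\tilde\xi)=\sum_{\tilde x\in\tilde{\mathcal X}}\tilde\xi(\tilde x)\tilde{\mathbf f}(\tilde x)\tilde{\mathbf f}(\tilde x)^\top$, and let $\Phi_A(\tilde\xi)=\mathrm{tr}(\tilde{\mathbf M}(\tilde\xi)^{-1})$ if $\tilde{\mathbf M}(\tilde\xi)$ is non-singular and $\Phi_A(\tilde\xi)=+\infty$ otherwise ($A$-optimality criterion). *)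

theory Defs
  imports "HOL-Analysis.Analysis"
begin

definition outer :: "real^'n \<Rightarrow> real^'n \<Rightarrow> real^'n^'n" where
  "outer u v = (\<chi> i k. u$i * v$k)"

definition sym_psd :: "real^'n^'n \<Rightarrow> bool" where
  "sym_psd A \<longleftrightarrow> transpose A = A \<and> (\<forall>x. 0 \<le> x \<bullet> (A *v x))"

definition sym_pd :: "real^'n^'n \<Rightarrow> bool" where
  "sym_pd A \<longleftrightarrow> transpose A = A \<and> (\<forall>x. x \<noteq> 0 \<longrightarrow> 0 < x \<bullet> (A *v x))"

definition info_matrix :: "('x::finite \<Rightarrow> real^'n) \<Rightarrow> ('x \<Rightarrow> real) \<Rightarrow> real^'n^'n" where
  "info_matrix f \<xi> = (\<Sum>x\<in>UNIV. \<xi> x *\<^sub>R outer (f x) (f x))"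

text \<open>Compound Bayes risk criterion; the index set {1..s} is the finite type 'j.\<close>
definition CBRC :: "('x::finite \<Rightarrow> real^'n) \<Rightarrow> ('j::finite \<Rightarrow> real^'n^'n) \<Rightarrow> ('j \<Rightarrow> real^'n^'n)
    \<Rightarrow> ('x \<Rightarrow> real) \<Rightarrow> ereal" where
  "CBRC f B H \<xi> =
     (if (\<forall>j. invertible (info_matrix f \<xi> + B j))
      then ereal (\<Sum>j\<in>UNIV. trace (matrix_inv (info_matrix f \<xi> + B j) ** H j))
      else \<infinity>)"

definition blk :: "'j::finite \<Rightarrow> real^'n \<Rightarrow> real^('j \<times> 'n)" where
  "blk j v = (\<chi> il. if fst il = j then v $ snd il else 0)"

text \<open>Artificial design space: points Inl (j,x) are (j,x) in X~_j, points Inr (j,k) with k < r j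
  are the auxiliary points y^(j)_(k+1) in Y~_j.\<close>
definition art_space :: "('j \<Rightarrow> nat) \<Rightarrow> (('j \<times> 'x) + ('j \<times> nat)) set" where
  "art_space r = range Inl \<union> Inr ` {(j,k). k < r j}"

definition art_f :: "('x \<Rightarrow> real^'n) \<Rightarrow> ('j::finite \<Rightarrow> real^'n^'n) \<Rightarrow> ('j \<Rightarrow> nat \<Rightarrow> real^'n)
    \<Rightarrow> ('j \<times> 'x) + ('j \<times> nat) \<Rightarrow> real^('j \<times> 'n)" where
  "art_f f K u z = (case z of
      Inl (j, x) \<Rightarrow> blk j (matrix_inv (K j) *v f x)
    | Inr (j, k) \<Rightarrow> blk j (u j k))"

definition art_info_matrix :: "('x::finite \<Rightarrow> real^'n) \<Rightarrow> ('j::finite \<Rightarrow> real^'n^'n)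
    \<Rightarrow> ('j \<Rightarrow> nat \<Rightarrow> real^'n) \<Rightarrow> ('j \<Rightarrow> nat) \<Rightarrow> (('j \<times> 'x) + ('j \<times> nat) \<Rightarrow> real)
    \<Rightarrow> real^('j \<times> 'n)^('j \<times> 'n)" where
  "art_info_matrix f K u r \<xi> =
     (\<Sum>z\<in>art_space r. \<xi> z *\<^sub>R outer (art_f f K u z) (art_f f K u z))"

definition Phi_A :: "real^'m^'m \<Rightarrow> ereal" where
  "Phi_A M = (if invertible M then ereal (trace (matrix_inv M)) else \<infinity>)"

end

theory Submission imports Defs begin


lemma outer_nth[simp]: "outer u v $ i $ k = u$i * v$k"
  by (simp add: outer_def)

lemma blk_nth2[simp]: "blk j v $ (i,a) = (if i = j then v $ a else 0)"
  by (simp add: blk_def)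

definition bd :: "('j::finite \<Rightarrow> real^'n^'n) \<Rightarrow> real^('j \<times> 'n)^('j \<times> 'n)" where
  "bd N = (\<chi> p q. if fst p = fst q then N (fst p) $ snd p $ snd q else 0)"

lemma bd_nth2: "bd N $ (i,a) $ (k,b) = (if i = k then N i $ a $ b else 0)"
  by (simp add: bd_def)

lemma sum_UNIV_prod: "sum g (UNIV::('a::finite\<times>'b::finite) set) = (\<Sum>a\<in>UNIV. \<Sum>b\<in>UNIV. g (a,b))"
  by (simp add: sum.cartesian_product)

lemma sum_delta_inner: "(\<Sum>aa\<in>(UNIV::'a::finite set). \<Sum>ba\<in>B. if aa = j then g ba else 0) = (\<Sum>ba\<in>B. g ba)"
proof -
  have "(\<Sum>aa\<in>(UNIV::'a::finite set). \<Sum>ba\<in>B. if aa = j then g ba else 0) = (\<Sum>aa\<in>(UNIV::'a set). if aa = j then (\<Sum>ba\<in>B. g ba) else 0)"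
    by (rule sum.cong) auto
  then show ?thesis by simp
qed

lemma mat_eq_pairs: "(\<And>i a k b. A $ (i,a) $ (k,b) = C $ (i,a) $ (k,b)) \<Longrightarrow> A = C"
  by (simp add: vec_eq_iff)

lemma bd_mult: "bd N ** bd P = bd (\<lambda>j. N j ** P j)"
proof (rule mat_eq_pairs)
  fix i a k b
  have "(bd N ** bd P) $ (i,a) $ (k,b) = (\<Sum>j\<in>UNIV. \<Sum>c\<in>UNIV. (if i = j then N i $ a $ c else 0) * (if j = k then P j $ c $ b else 0))"
    apply (simp add: matrix_matrix_mult_def)
    apply (subst sum_UNIV_prod)
    apply (simp add: bd_nth2)
    done
  also have "\<dots> = (\<Sum>j\<in>UNIV. \<Sum>c\<in>UNIV. if j = i then (N i $ a $ c) * (if i = k then P i $ c $ b else 0) else 0)"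
    by (intro sum.cong) auto
  also have "\<dots> = (if i = k then (N i ** P i) $ a $ b else 0)"
    by (simp only: sum_delta_inner) (simp add: matrix_matrix_mult_def)
  finally show "(bd N ** bd P) $ (i,a) $ (k,b) = bd (\<lambda>j. N j ** P j) $ (i,a) $ (k,b)" by (simp add: bd_nth2)
qed

lemma bd_one: "bd (\<lambda>j. mat 1) = mat 1"
  by (rule mat_eq_pairs) (simp add: bd_nth2 mat_def)

lemma trace_bd: "trace (bd N) = (\<Sum>j\<in>UNIV. trace (N j))"
  apply (simp add: trace_def)
  apply (subst sum_UNIV_prod)
  apply (simp add: bd_nth2)
  done

lemma minv: fixes A :: "real^'n^'n" assumes "invertible A"
  shows "A ** matrix_inv A = mat 1 \<and> matrix_inv A ** A = mat 1"
  using assms unfolding invertible_def matrix_inv_def by (rule someI_ex)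

lemma minv_unique: fixes A X :: "real^'n^'n" assumes "A ** X = mat 1"
  shows "matrix_inv A = X"
proof -
  have "X ** A = mat 1" using assms matrix_left_right_inverse by blast
  then have inv: "invertible A" using assms invertible_def by blast
  have "matrix_inv A = matrix_inv A ** (A ** X)" using assms by simp
  also have "\<dots> = X" by (simp add: matrix_mul_assoc minv[OF inv])
  finally show ?thesis .
qed

lemma bd_invertible: "(\<forall>j. invertible (N j)) \<Longrightarrow> invertible (bd N) \<and> matrix_inv (bd N) = bd (\<lambda>j. matrix_inv (N j))"
proof -
  assume a: "\<forall>j. invertible (N j)"
  have e: "bd N ** bd (\<lambda>j. matrix_inv (N j)) = mat 1"
    using a by (simp add: bd_mult minv bd_one)
  then show ?thesis using minv_unique[OF e] invertible_right_inverse by blast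
qed

lemma bd_invertible_imp: fixes N :: "'j::finite \<Rightarrow> real^'n^'n" shows "invertible (bd N) \<Longrightarrow> invertible (N j)"
proof -
  assume "invertible (bd N)"
  then obtain X where X: "X ** bd N = mat 1" unfolding invertible_def by blast
  define P where "P = (\<chi> a c. X $ (j,a) $ (j,c))"
  have "(P ** N j) $ a $ b = (mat 1 :: real^'n^'n) $ a $ b" for a b
  proof -
    have "(X ** bd N) $ (j,a) $ (j,b) = (\<Sum>aa\<in>UNIV. \<Sum>ba\<in>UNIV. if aa = j then X $ (j, a) $ (j, ba) * N j $ ba $ b else 0)"
      apply (simp add: matrix_matrix_mult_def)
      apply (subst sum_UNIV_prod)
      apply (simp add: bd_nth2)
      apply (intro sum.cong)
        apply auto
      done
    also have "\<dots> = (P ** N j) $ a $ b"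
      by (simp only: sum_delta_inner) (simp add: matrix_matrix_mult_def P_def)
    finally have "(P ** N j) $ a $ b = (X ** bd N) $ (j,a) $ (j,b)" ..
    also have "\<dots> = (mat 1 :: real^'n^'n) $ a $ b" using X by (simp add: mat_def)
    finally show ?thesis .
  qed
  then have "P ** N j = mat 1" by (simp add: vec_eq_iff)
  then show "invertible (N j)" using invertible_left_inverse by blast
qed



lemma art_bd:
  fixes f :: "'x::finite \<Rightarrow> real^'n" and K :: "'j::finite \<Rightarrow> real^'n^'n"
  assumes l: "\<forall>j x. \<xi>t (Inl (j,x)) = \<xi> x" and r: "\<forall>j k. k < r j \<longrightarrow> \<xi>t (Inr (j,k)) = 1"
  shows "art_info_matrix f K u r \<xi>t = bd (\<lambda>j. (\<Sum>x\<in>UNIV. \<xi> x *\<^sub>R outer (matrix_inv (K j) *v f x) (matrix_inv (K j) *v f x)) + (\<Sum>k<r j. outer (u j k) (u j k)))"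
proof (rule mat_eq_pairs)
  fix i a k b
  define g where "g z = \<xi>t z * (art_f f K u z $ (i,a) * art_f f K u z $ (k,b))" for z
  define S where "S = (SIGMA j:(UNIV::'j set). {..<r j})"
  have sp: "art_space r = range Inl \<union> Inr ` S" by (auto simp: art_space_def S_def)
  have fS: "finite S" unfolding S_def by auto
  have "art_info_matrix f K u r \<xi>t $ (i,a) $ (k,b) = sum g (art_space r)"
    by (simp add: art_info_matrix_def g_def)
  also have "\<dots> = sum g (range Inl) + sum g (Inr ` S)"
    unfolding sp by (rule sum.union_disjoint) (auto simp: fS)
  also have "sum g (range Inl) = (\<Sum>w\<in>UNIV. g (Inl w))"
    by (simp add: sum.reindex)
  also have "\<dots> = (\<Sum>j\<in>UNIV. \<Sum>x\<in>UNIV. if j = i then (if i = k then \<xi> x * ((matrix_inv (K i) *v f x) $ a * (matrix_inv (K i) *v f x) $ b) else 0) else 0)"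
    apply (subst sum_UNIV_prod)
    apply (intro sum.cong)
      apply (auto simp: g_def art_f_def l)
    done
  also have "\<dots> = (if i = k then (\<Sum>x\<in>UNIV. \<xi> x * ((matrix_inv (K i) *v f x) $ a * (matrix_inv (K i) *v f x) $ b)) else 0)"
    by (simp only: sum_delta_inner) simp
  also have "sum g (Inr ` S) = (\<Sum>w\<in>S. g (Inr w))"
    by (simp add: sum.reindex)
  also have "\<dots> = (\<Sum>j\<in>UNIV. \<Sum>m\<in>{..<r j}. if j = i then (if i = k then u i m $ a * u i m $ b else 0) else 0)"
    unfolding S_def
    apply (subst sum.Sigma[symmetric, of UNIV "\<lambda>j. {..<r j}" "\<lambda>j m. g (Inr (j,m))", simplified])
    apply (intro sum.cong)
      apply (auto simp: g_def art_f_def r)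
    done
  also have "\<dots> = (if i = k then (\<Sum>m\<in>{..<r i}. u i m $ a * u i m $ b) else 0)"
  proof -
    have "(\<Sum>j\<in>UNIV. \<Sum>m\<in>{..<r j}. if j = i then (if i = k then u i m $ a * u i m $ b else 0) else 0)
       = (\<Sum>j\<in>UNIV. if j = i then (\<Sum>m\<in>{..<r i}. if i = k then u i m $ a * u i m $ b else 0) else 0)"
      by (rule sum.cong) auto
    then show ?thesis by simp
  qed
  finally show "art_info_matrix f K u r \<xi>t $ (i,a) $ (k,b) = bd (\<lambda>j. (\<Sum>x\<in>UNIV. \<xi> x *\<^sub>R outer (matrix_inv (K j) *v f x) (matrix_inv (K j) *v f x)) + (\<Sum>k<r j. outer (u j k) (u j k))) $ (i,a) $ (k,b)"
    by (simp add: bd_nth2)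
qed



lemma matrix_add_rdistrib': fixes A B C :: "real^'n^'n" shows "(A + B) ** C = A ** C + B ** C"
  by (simp add: matrix_matrix_mult_def vec_eq_iff sum.distrib algebra_simps)

lemma conj_outer: fixes A :: "real^'n^'n" shows "A ** outer v v ** transpose A = outer (A *v v) (A *v v)"
  by (simp add: vec_eq_iff matrix_matrix_mult_def matrix_vector_mult_def transpose_def
      sum_distrib_left sum_distrib_right mult_ac)

lemma conj_sum: fixes A :: "real^'n^'n" assumes "finite S"
  shows "A ** (\<Sum>x\<in>S. c x *\<^sub>R outer (v x) (v x)) ** transpose A = (\<Sum>x\<in>S. c x *\<^sub>R outer (A *v v x) (A *v v x))"
  using assms
proof (induction S rule: finite_induct)
  case empty
  then show ?case by (simp add: vec_eq_iff matrix_matrix_mult_def)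
next
  case (insert x F)
  then show ?case
    by (simp add: matrix_add_ldistrib matrix_add_rdistrib' matrix_scalar_ac scalar_matrix_assoc[symmetric] conj_outer)
qed

lemma K_inv: fixes K :: "real^'n^'n" assumes "sym_pd (K ** transpose K)" shows "invertible K"
proof -
  have "\<forall>x. transpose K *v x = 0 \<longrightarrow> x = 0"
  proof (intro allI impI)
    fix x assume h: "transpose K *v x = 0"
    have "x \<bullet> ((K ** transpose K) *v x) = 0"
      using h by (simp add: matrix_vector_mul_assoc[symmetric])
    then show "x = 0" using assms unfolding sym_pd_def by force
  qed
  then have "invertible (transpose K)"
    using matrix_left_invertible_ker invertible_left_inverse by blast
  then show ?thesis using transpose_invertible by fastforce
qed

lemma block_facts:
  fixes K A H :: "real^'n^'n"
  assumes Kinv: "invertible K" and H: "H = K ** transpose K"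
  defines "N \<equiv> matrix_inv K ** A ** transpose (matrix_inv K)"
  shows "invertible N \<longleftrightarrow> invertible A"
    and "invertible A \<Longrightarrow> trace (matrix_inv N) = trace (matrix_inv A ** H)"
proof -
  have k1: "K ** matrix_inv K = mat 1" and k2: "matrix_inv K ** K = mat 1" using minv[OF Kinv] by auto
  have kt1: "transpose (matrix_inv K) ** transpose K = mat 1"
    using k1 by (metis matrix_transpose_mul transpose_mat)
  have kt2: "transpose K ** transpose (matrix_inv K) = mat 1"
    using k2 by (metis matrix_transpose_mul transpose_mat)
  have iKi: "invertible (matrix_inv K)" using k1 k2 invertible_def by blast
  have iKt: "invertible (transpose (matrix_inv K))" using transpose_invertible[OF iKi] .
  have iKt': "invertible (transpose K)" using transpose_invertible[OF Kinv] .
  have AN: "A = K ** N ** transpose K"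
    unfolding N_def by (simp add: matrix_mul_assoc k1) (simp add: matrix_mul_assoc[symmetric] kt1)
  show "invertible N \<longleftrightarrow> invertible A"
  proof
    assume "invertible N" then show "invertible A"
      using AN by (metis Kinv iKt' invertible_mult)
  next
    assume "invertible A" then show "invertible N"
      unfolding N_def by (metis iKi iKt invertible_mult)
  qed
  assume iA: "invertible A"
  have "N ** (transpose K ** matrix_inv A ** K) = mat 1"
  proof -
    have "N ** (transpose K ** matrix_inv A ** K) = matrix_inv K ** A ** (transpose (matrix_inv K) ** transpose K) ** matrix_inv A ** K"
      unfolding N_def by (simp add: matrix_mul_assoc)
    also have "\<dots> = matrix_inv K ** (A ** matrix_inv A) ** K"
      by (simp add: kt1 matrix_mul_assoc)
    also have "\<dots> = mat 1" using minv[OF iA] k2 by simp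
    finally show ?thesis .
  qed
  then have "matrix_inv N = transpose K ** matrix_inv A ** K" by (rule minv_unique)
  then have "trace (matrix_inv N) = trace (transpose K ** (matrix_inv A ** K))" by (simp add: matrix_mul_assoc)
  also have "\<dots> = trace ((matrix_inv A ** K) ** transpose K)" by (rule trace_mul_sym)
  also have "\<dots> = trace (matrix_inv A ** H)" by (simp add: H matrix_mul_assoc)
  finally show "trace (matrix_inv N) = trace (matrix_inv A ** H)" .
qed



lemma key:
  fixes f :: "'x::finite \<Rightarrow> real^'n" and B H K :: "'j::finite \<Rightarrow> real^'n^'n"
  assumes Kinv: "\<forall>j. invertible (K j)" and K_fact: "\<forall>j. H j = K j ** transpose (K j)"
    and u_fact: "\<forall>j. matrix_inv (K j) ** B j ** transpose (matrix_inv (K j))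
                    = (\<Sum>k<r j. outer (u j k) (u j k))"
    and l: "\<forall>j x. \<xi>t (Inl (j,x)) = \<xi> x" and rr: "\<forall>j k. k < r j \<longrightarrow> \<xi>t (Inr (j,k)) = 1"
  shows "Phi_A (art_info_matrix f K u r \<xi>t) = CBRC f B H \<xi>"
proof -
  define N where "N j = matrix_inv (K j) ** (info_matrix f \<xi> + B j) ** transpose (matrix_inv (K j))" for j
  have "art_info_matrix f K u r \<xi>t = bd N"
  proof -
    have "(\<Sum>x\<in>UNIV. \<xi> x *\<^sub>R outer (matrix_inv (K j) *v f x) (matrix_inv (K j) *v f x)) + (\<Sum>k<r j. outer (u j k) (u j k)) = N j" for j
      unfolding N_def matrix_add_ldistrib matrix_add_rdistrib' info_matrix_def
      by (simp add: conj_sum u_fact)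
    then show ?thesis using art_bd[OF l rr, of f K u] by presburger
  qed
  moreover have blk: "invertible (N j) \<longleftrightarrow> invertible (info_matrix f \<xi> + B j)"
    "invertible (info_matrix f \<xi> + B j) \<Longrightarrow> trace (matrix_inv (N j)) = trace (matrix_inv (info_matrix f \<xi> + B j) ** H j)" for j
    using block_facts[OF Kinv[rule_format, of j] K_fact[rule_format, of j], of "info_matrix f \<xi> + B j"]
    unfolding N_def by auto
  ultimately show ?thesis
  proof (cases "\<forall>j. invertible (info_matrix f \<xi> + B j)")
    case True
    then have "\<forall>j. invertible (N j)" using blk by auto
    from bd_invertible[OF this] have "Phi_A (bd N) = ereal (\<Sum>j\<in>UNIV. trace (matrix_inv (N j)))"
      by (simp add: Phi_A_def trace_bd)
    also have "\<dots> = CBRC f B H \<xi>" using True blk by (simp add: CBRC_def)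
    finally show ?thesis using \<open>art_info_matrix f K u r \<xi>t = bd N\<close> by simp
  next
    case False
    then obtain j where "\<not> invertible (N j)" using blk by auto
    then have "\<not> invertible (bd N)" using bd_invertible_imp by blast
    then show ?thesis using False \<open>art_info_matrix f K u r \<xi>t = bd N\<close> by (simp add: Phi_A_def CBRC_def)
  qed
qed

theorem theorem1:
  fixes f :: "'x::finite \<Rightarrow> real^'n"
    and B H K :: "'j::finite \<Rightarrow> real^'n^'n"
    and u :: "'j \<Rightarrow> nat \<Rightarrow> real^'n"
    and \<Xi> :: "('x \<Rightarrow> real) set"
    and j1 :: 'j
    and \<xi>s :: "('j \<times> 'x) + ('j \<times> nat) \<Rightarrow> real"
  assumes span_f: "span (range f) = UNIV"
    and B_psd: "\<forall>j. sym_psd (B j)"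
    and H_pd: "\<forall>j. sym_pd (H j)"
    and Xi_nonneg: "\<forall>\<xi>\<in>\<Xi>. \<forall>x. 0 \<le> \<xi> x"
    and Xi_finite: "\<exists>\<xi>\<in>\<Xi>. CBRC f B H \<xi> < \<infinity>"
    and K_fact: "\<forall>j. H j = K j ** transpose (K j)"
    and u_fact: "\<forall>j. matrix_inv (K j) ** B j ** transpose (matrix_inv (K j))
                    = (\<Sum>k<rank (B j). outer (u j k) (u j k))"
    and feas: "(\<forall>z\<in>art_space (\<lambda>j. rank (B j)). 0 \<le> \<xi>s z)
             \<and> (\<forall>j x. \<xi>s (Inl (j, x)) = \<xi>s (Inl (j1, x)))
             \<and> (\<forall>j k. k < rank (B j) \<longrightarrow> \<xi>s (Inr (j, k)) = 1)
             \<and> (\<lambda>x. \<xi>s (Inl (j1, x))) \<in> \<Xi>"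
    and opt: "\<forall>\<xi>t :: ('j \<times> 'x) + ('j \<times> nat) \<Rightarrow> real.
               ((\<forall>z\<in>art_space (\<lambda>j. rank (B j)). 0 \<le> \<xi>t z)
                \<and> (\<forall>j x. \<xi>t (Inl (j, x)) = \<xi>t (Inl (j1, x)))
                \<and> (\<forall>j k. k < rank (B j) \<longrightarrow> \<xi>t (Inr (j, k)) = 1)
                \<and> (\<lambda>x. \<xi>t (Inl (j1, x))) \<in> \<Xi>)
               \<longrightarrow> Phi_A (art_info_matrix f K u (\<lambda>j. rank (B j)) \<xi>s)
                   \<le> Phi_A (art_info_matrix f K u (\<lambda>j. rank (B j)) \<xi>t)"
  shows "(\<lambda>x. \<xi>s (Inl (j1, x))) \<in> \<Xi>
       \<and> (\<forall>\<xi>\<in>\<Xi>. CBRC f B H (\<lambda>x. \<xi>s (Inl (j1, x))) \<le> CBRC f B H \<xi>)"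
proof -
  have Kinv: "\<forall>j. invertible (K j)" using H_pd K_fact K_inv by metis
  have es: "Phi_A (art_info_matrix f K u (\<lambda>j. rank (B j)) \<xi>s) = CBRC f B H (\<lambda>x. \<xi>s (Inl (j1, x)))"
    by (rule key[OF Kinv K_fact u_fact]) (use feas in auto)
  have "CBRC f B H (\<lambda>x. \<xi>s (Inl (j1, x))) \<le> CBRC f B H \<xi>" if xi: "\<xi> \<in> \<Xi>" for \<xi>
  proof -
    define \<xi>t where "\<xi>t z = (case z of Inl (j,x) \<Rightarrow> \<xi> x | Inr _ \<Rightarrow> 1)" for z :: "('j \<times> 'x) + ('j \<times> nat)"
    have et: "Phi_A (art_info_matrix f K u (\<lambda>j. rank (B j)) \<xi>t) = CBRC f B H \<xi>"
      by (rule key[OF Kinv K_fact u_fact]) (auto simp: \<xi>t_def)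
    have "(\<forall>z\<in>art_space (\<lambda>j. rank (B j)). 0 \<le> \<xi>t z)"
      using Xi_nonneg xi by (auto simp: \<xi>t_def art_space_def)
    moreover have "(\<lambda>x. \<xi>t (Inl (j1, x))) = \<xi>" by (simp add: \<xi>t_def)
    ultimately have "Phi_A (art_info_matrix f K u (\<lambda>j. rank (B j)) \<xi>s)
                   \<le> Phi_A (art_info_matrix f K u (\<lambda>j. rank (B j)) \<xi>t)"
      using opt xi by (auto simp: \<xi>t_def)
    then show ?thesis using es et by simp
  qed
  then show ?thesis using feas by blast
qed


end
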